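(* Let $p$ be a prime and $n\ge1$. Let $D_n=\prod_{1\le h\le k\le n,\ \gcd(h,k)=1} k$ be the product of the denominators of all nonzero Farey fractions of order $n$ (each written in lowest terms). Then $$\mathrm{ord}_p(D_n)=\sum_{b=1}^{\lfloor\log_p n\rfloor}\ \sum_{a=1}^{\lfloor n/p^b\rfloor}\varphi(ap^b).$$
   Context: $\mathrm{ord}_p(m)$ is the exponent of the prime $p$ in the factorization of the positive integer $m$; $\varphi$ is Euler's totient function. *)

theory Defs
  imports Complex_Main "HOL-Number_Theory.Number_Theory"
begin

definition farey_denom_prod :: "nat \<Rightarrow> nat" where
  "farey_denom_prod n = (\<Prod>(h, k) \<in> {(h, k). 1 \<le> h \<and> h \<le> k \<and> k \<le> n \<and> gcd h k = 1}. k)"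

end

theory Submission
  imports Defs
begin

lemma farey_set_eq:
  "{(h, k). 1 \<le> h \<and> h \<le> k \<and> k \<le> n \<and> gcd h k = 1} =
   (\<lambda>(k,h). (h,k)) ` (SIGMA k:{1..n}. totatives k)"
  unfolding set_eq_iff
proof
  fix x :: "nat \<times> nat"
  obtain h k where x: "x = (h, k)" by (cases x)
  have "x \<in> (\<lambda>(k,h). (h,k)) ` (SIGMA k:{1..n}. totatives k) \<longleftrightarrow> (k, h) \<in> (SIGMA k:{1..n}. totatives k)"
  proof
    assume "x \<in> (\<lambda>(k,h). (h,k)) ` (SIGMA k:{1..n}. totatives k)"
    then obtain y where y: "y \<in> (SIGMA k:{1..n}. totatives k)" "x = (\<lambda>(k,h). (h,k)) y" by (rule imageE)
    obtain a c where "y = (a, c)" by (cases y)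
    with y x show "(k, h) \<in> (SIGMA k:{1..n}. totatives k)" by simp
  next
    assume "(k, h) \<in> (SIGMA k:{1..n}. totatives k)"
    moreover have "x = (\<lambda>(k,h). (h,k)) (k, h)" using x by simp
    ultimately show "x \<in> (\<lambda>(k,h). (h,k)) ` (SIGMA k:{1..n}. totatives k)" by (rule rev_image_eqI)
  qed
  also have "\<dots> \<longleftrightarrow> 1 \<le> h \<and> h \<le> k \<and> k \<le> n \<and> gcd h k = 1"
    unfolding mem_Sigma_iff totatives_def coprime_iff_gcd_eq_1 by auto
  finally show "x \<in> {(h, k). 1 \<le> h \<and> h \<le> k \<and> k \<le> n \<and> gcd h k = 1} \<longleftrightarrow>
     x \<in> (\<lambda>(k,h). (h,k)) ` (SIGMA k:{1..n}. totatives k)" unfolding x by simp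
qed

lemma step1:
  fixes p :: nat assumes "prime p"
  shows "multiplicity p (farey_denom_prod n) = (\<Sum>k\<in>{1..n}. totient k * multiplicity p k)"
proof -
  let ?S = "{(h, k). 1 \<le> h \<and> h \<le> k \<and> k \<le> n \<and> gcd h k = 1}"
  have fin: "finite ?S" unfolding farey_set_eq by auto
  have "multiplicity p (farey_denom_prod n) = (\<Sum>x\<in>?S. multiplicity p (snd x))"
    unfolding farey_denom_prod_def
    apply (subst prime_elem_multiplicity_prod_distrib)
    using assms fin by (auto simp: case_prod_beta intro: sum.cong)
  also have "\<dots> = (\<Sum>x\<in>(SIGMA k:{1..n}. totatives k). multiplicity p (fst x))"
    unfolding farey_set_eq
    by (subst sum.reindex) (auto simp: inj_on_def case_prod_beta)
  also have "\<dots> = (\<Sum>k\<in>{1..n}. \<Sum>h\<in>totatives k. multiplicity p k)"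
    using sum.Sigma[of "{1..n}" totatives "\<lambda>k h. multiplicity p k"] by (simp add: split_def)
  also have "\<dots> = (\<Sum>k\<in>{1..n}. totient k * multiplicity p k)"
    by (simp add: totient_def)
  finally show ?thesis .
qed

lemma mult_card:
  fixes p k n L :: nat
  assumes "prime p" "1 \<le> k" "k \<le> n" "L = nat \<lfloor>log (real p) (real n)\<rfloor>"
  shows "multiplicity p k = card {b\<in>{1..L}. p ^ b dvd k}"
proof -
  let ?m = "multiplicity p k"
  have p1: "p > 1" using assms prime_gt_1_nat by auto
  have "p ^ ?m dvd k" by (simp add: multiplicity_dvd)
  hence "p ^ ?m \<le> k" using assms by (intro dvd_imp_le) auto
  hence "p ^ ?m \<le> n" using assms by linarith
  hence "real (p ^ ?m) \<le> real n" by linarith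
  hence "real p powr real ?m \<le> real n" using p1
    by (simp add: powr_realpow)
  hence "real ?m \<le> log (real p) (real n)" using p1 assms
    by (subst (asm) powr_le_iff) auto
  hence mL: "?m \<le> L" using assms(4) by linarith
  have "{b\<in>{1..L}. p ^ b dvd k} = {1..?m}"
    using mL assms p1
    by (auto simp: power_dvd_iff_le_multiplicity)
  thus ?thesis by simp
qed

theorem lemma4p2:
  fixes p n :: nat
  assumes "prime p" and "n \<ge> 1"
  shows "multiplicity p (farey_denom_prod n) =
    (\<Sum>b = 1..nat \<lfloor>log (real p) (real n)\<rfloor>. \<Sum>a = 1..n div p ^ b. totient (a * p ^ b))"
proof -
  define L where "L = nat \<lfloor>log (real p) (real n)\<rfloor>"
  have p1: "p > 1" using assms prime_gt_1_nat by auto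
  have "multiplicity p (farey_denom_prod n) = (\<Sum>k\<in>{1..n}. totient k * card {b\<in>{1..L}. p ^ b dvd k})"
    using step1[OF assms(1)] mult_card[OF assms(1) _ _ L_def] by (auto intro!: sum.cong)
  also have "\<dots> = (\<Sum>k\<in>{1..n}. \<Sum>b\<in>{1..L}. if p ^ b dvd k then totient k else 0)"
    by (auto intro!: sum.cong arg_cong[where f=card] simp: sum.If_cases)
  also have "\<dots> = (\<Sum>b\<in>{1..L}. \<Sum>k\<in>{1..n}. if p ^ b dvd k then totient k else 0)"
    by (rule sum.swap)
  also have "\<dots> = (\<Sum>b\<in>{1..L}. \<Sum>a = 1..n div p ^ b. totient (a * p ^ b))"
  proof (rule sum.cong[OF refl])
    fix b assume "b \<in> {1..L}"
    have pb: "p ^ b > 0" using p1 by simp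
    have img: "(\<lambda>a. a * p ^ b) ` {1..n div p ^ b} = {k\<in>{1..n}. p ^ b dvd k}"
    proof safe
      fix a assume "a \<in> {1..n div p ^ b}"
      thus "a * p ^ b \<in> {1..n}" using pb
        by (auto simp: less_eq_div_iff_mult_less_eq)
    next
      fix k assume "k \<in> {1..n}" "p ^ b dvd k"
      then obtain a where "k = a * p ^ b" by (auto simp: dvd_def mult.commute)
      thus "k \<in> (\<lambda>a. a * p ^ b) ` {1..n div p ^ b}" using \<open>k \<in> {1..n}\<close> pb
        by (auto simp: less_eq_div_iff_mult_less_eq intro!: imageI)
    qed auto
    have "(\<Sum>k\<in>{1..n}. if p ^ b dvd k then totient k else 0) = (\<Sum>k\<in>{k\<in>{1..n}. p ^ b dvd k}. totient k)"
      by (rule sum.inter_filter[symmetric]) simp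
    also have "\<dots> = (\<Sum>a = 1..n div p ^ b. totient (a * p ^ b))"
      unfolding img[symmetric] using pb
      by (subst sum.reindex) (auto simp: inj_on_def)
    finally show "(\<Sum>k\<in>{1..n}. if p ^ b dvd k then totient k else 0) = (\<Sum>a = 1..n div p ^ b. totient (a * p ^ b))" .
  qed
  finally show ?thesis unfolding L_def .
qed

end
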